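(* For every connected graph $G$, $\gamma_{rdR}(G)\ge \gamma(G)+\gamma_r(G)$. Moreover, equality holds if and only if $G$ is a star $K_{1,m}$ for some $m\ge 1$, or $\gamma_{r2}(G)=\gamma_r(G)=\gamma(G)$.
   Context: All graphs are finite and simple. An RDRD function of $G$ is a function $f:V(G)\to\{0,1,2,3\}$ such that every vertex with value $0$ has at least two neighbors with value $2$ or at least one neighbor with value $3$, every vertex with value $1$ has a neighbor with value $2$ or $3$, and the subgraph induced by the vertices with value $0$ has no isolated vertices; $\gamma_{rdR}(G)$ is the minimum of $\sum_v f(v)$ over RDRD functions. $\gamma(G)$ is the domination number. A restrained dominating set is a set $S\subseteq V(G)$ such that every vertex of $V(G)\setminus S$ has a neighbor in $S$ and a neighbor in $V(G)\setminus S$; $\gamma_r(G)$ is its minimum cardinality. A restrained $2$-dominating set is a set $S$ such that every vertex of $V(G)\setminus S$ has at least two neighbors in $S$ and $G[V(G)\setminus S]$ has no isolated vertices; $\gamma_{r2}(G)$ is its minimum cardinality. *)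

theory Defs
  imports Main
begin

definition graph :: "'a set \<Rightarrow> 'a set set \<Rightarrow> bool" where
  "graph V E \<longleftrightarrow> finite V \<and> (\<forall>e\<in>E. e \<subseteq> V \<and> card e = 2)"

definition adj :: "'a set set \<Rightarrow> 'a \<Rightarrow> 'a \<Rightarrow> bool" where
  "adj E u v \<longleftrightarrow> {u, v} \<in> E"

definition nbrs :: "'a set \<Rightarrow> 'a set set \<Rightarrow> 'a \<Rightarrow> 'a set" where
  "nbrs V E v = {u \<in> V. adj E v u}"

definition connected_graph :: "'a set \<Rightarrow> 'a set set \<Rightarrow> bool" where
  "connected_graph V E \<longleftrightarrow> graph V E \<and> V \<noteq> {} \<and>
     (\<forall>u\<in>V. \<forall>v\<in>V. (adj E)\<^sup>*\<^sup>* u v)"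

definition is_star :: "'a set \<Rightarrow> 'a set set \<Rightarrow> nat \<Rightarrow> bool" where
  "is_star V E m \<longleftrightarrow> (\<exists>c\<in>V. card V = m + 1 \<and> E = {{c, v} | v. v \<in> V - {c}})"

definition dominating_set :: "'a set \<Rightarrow> 'a set set \<Rightarrow> 'a set \<Rightarrow> bool" where
  "dominating_set V E S \<longleftrightarrow> S \<subseteq> V \<and> (\<forall>v\<in>V - S. nbrs V E v \<inter> S \<noteq> {})"

definition domination_number :: "'a set \<Rightarrow> 'a set set \<Rightarrow> nat" where
  "domination_number V E = (LEAST k. \<exists>S. dominating_set V E S \<and> card S = k)"

definition restrained_dominating_set :: "'a set \<Rightarrow> 'a set set \<Rightarrow> 'a set \<Rightarrow> bool" where
  "restrained_dominating_set V E S \<longleftrightarrow> S \<subseteq> V \<and>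
     (\<forall>v\<in>V - S. nbrs V E v \<inter> S \<noteq> {} \<and> nbrs V E v \<inter> (V - S) \<noteq> {})"

definition restrained_domination_number :: "'a set \<Rightarrow> 'a set set \<Rightarrow> nat" where
  "restrained_domination_number V E =
     (LEAST k. \<exists>S. restrained_dominating_set V E S \<and> card S = k)"

definition restrained_2dominating_set :: "'a set \<Rightarrow> 'a set set \<Rightarrow> 'a set \<Rightarrow> bool" where
  "restrained_2dominating_set V E S \<longleftrightarrow> S \<subseteq> V \<and>
     (\<forall>v\<in>V - S. card (nbrs V E v \<inter> S) \<ge> 2 \<and> nbrs V E v \<inter> (V - S) \<noteq> {})"

definition restrained_2domination_number :: "'a set \<Rightarrow> 'a set set \<Rightarrow> nat" where
  "restrained_2domination_number V E =
     (LEAST k. \<exists>S. restrained_2dominating_set V E S \<and> card S = k)"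

text \<open>Restrained double Roman dominating (RDRD) functions; values in {0,1,2,3},
  the function is only relevant on V.\<close>
definition rdrd_function :: "'a set \<Rightarrow> 'a set set \<Rightarrow> ('a \<Rightarrow> nat) \<Rightarrow> bool" where
  "rdrd_function V E f \<longleftrightarrow>
     (\<forall>v\<in>V. f v \<le> 3) \<and>
     (\<forall>v\<in>V. f v = 0 \<longrightarrow>
        (card {u \<in> nbrs V E v. f u = 2} \<ge> 2 \<or> (\<exists>u\<in>nbrs V E v. f u = 3))) \<and>
     (\<forall>v\<in>V. f v = 1 \<longrightarrow> (\<exists>u\<in>nbrs V E v. f u \<ge> 2)) \<and>
     (\<forall>v\<in>V. f v = 0 \<longrightarrow> (\<exists>u\<in>nbrs V E v. f u = 0))"

definition rdrd_number :: "'a set \<Rightarrow> 'a set set \<Rightarrow> nat" where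
  "rdrd_number V E = (LEAST w. \<exists>f. rdrd_function V E f \<and> (\<Sum>v\<in>V. f v) = w)"

end

theory Submission
  imports Defs
begin

lemma ind_card: "finite A \<Longrightarrow> (\<Sum>x\<in>A. if P x then 1 else 0) = (card {x\<in>A. P x} :: nat)"
  by (simp add: sum.inter_filter[symmetric])

lemma weight:
  assumes "finite V" "\<forall>v\<in>V. f v \<le> (3::nat)"
  shows "sum f V = card {v\<in>V. 1 \<le> f v} + card {v\<in>V. 2 \<le> f v} + card {v\<in>V. f v = 3}"
proof -
  have "sum f V = (\<Sum>v\<in>V. (if 1 \<le> f v then 1 else 0) + (if 2 \<le> f v then 1 else 0) + (if f v = 3 then 1 else 0))"
  proof (rule sum.cong)
    fix v assume "v \<in> V"
    with assms(2) have "f v \<le> 3" by auto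
    then show "f v = (if 1 \<le> f v then 1 else 0) + (if 2 \<le> f v then 1 else 0) + (if f v = 3 then 1 else 0)"
      by auto
  qed simp
  also have "\<dots> = card {v\<in>V. 1 \<le> f v} + card {v\<in>V. 2 \<le> f v} + card {v\<in>V. f v = 3}"
    by (simp add: sum.distrib ind_card assms(1))
  finally show ?thesis .
qed

lemma nb_V: "u \<in> nbrs V E x \<Longrightarrow> u \<in> V"
  by (simp add: nbrs_def)

lemma nb_sym: "u \<in> nbrs V E x \<Longrightarrow> x \<in> V \<Longrightarrow> x \<in> nbrs V E u"
  by (auto simp: nbrs_def adj_def insert_commute)

lemma nb_ne: "graph V E \<Longrightarrow> u \<in> nbrs V E x \<Longrightarrow> u \<noteq> x"
  by (auto simp: nbrs_def adj_def graph_def)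

lemma dom_att: "finite V \<Longrightarrow> \<exists>S. dominating_set V E S \<and> card S = domination_number V E"
  unfolding domination_number_def
  by (rule LeastI_ex) (auto simp: dominating_set_def)

lemma dom_le: "dominating_set V E S \<Longrightarrow> domination_number V E \<le> card S"
  unfolding domination_number_def by (rule Least_le) blast

lemma rd_att: "finite V \<Longrightarrow> \<exists>S. restrained_dominating_set V E S \<and> card S = restrained_domination_number V E"
  unfolding restrained_domination_number_def
  by (rule LeastI_ex) (auto simp: restrained_dominating_set_def)

lemma rd_le: "restrained_dominating_set V E S \<Longrightarrow> restrained_domination_number V E \<le> card S"
  unfolding restrained_domination_number_def by (rule Least_le) blast

lemma r2_att: "finite V \<Longrightarrow> \<exists>S. restrained_2dominating_set V E S \<and> card S = restrained_2domination_number V E"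
  unfolding restrained_2domination_number_def
  by (rule LeastI_ex) (auto simp: restrained_2dominating_set_def)

lemma r2_le: "restrained_2dominating_set V E S \<Longrightarrow> restrained_2domination_number V E \<le> card S"
  unfolding restrained_2domination_number_def by (rule Least_le) blast

lemma rdrd_att: "\<exists>f. rdrd_function V E f \<and> sum f V = rdrd_number V E"
  unfolding rdrd_number_def
  by (rule LeastI_ex[where P="\<lambda>w. \<exists>f. rdrd_function V E f \<and> sum f V = w"])
     (rule exI[of _ "sum (\<lambda>_. 2) V"], rule exI[of _ "\<lambda>_. 2"], simp add: rdrd_function_def)

lemma rdrd_le: "rdrd_function V E f \<Longrightarrow> rdrd_number V E \<le> sum f V"
  unfolding rdrd_number_def by (rule Least_le) blast

lemma rd_dom: "restrained_dominating_set V E S \<Longrightarrow> dominating_set V E S"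
  by (auto simp: restrained_dominating_set_def dominating_set_def)

lemma r2_rd: "restrained_2dominating_set V E S \<Longrightarrow> restrained_dominating_set V E S"
  unfolding restrained_2dominating_set_def restrained_dominating_set_def
  by (metis card.empty not_numeral_le_zero)

lemma gam_le_r: "finite V \<Longrightarrow> domination_number V E \<le> restrained_domination_number V E"
  by (metis dom_le rd_att rd_dom)

lemma r_le_r2: "finite V \<Longrightarrow> restrained_domination_number V E \<le> restrained_2domination_number V E"
  by (metis r2_att r2_rd rd_le)


locale ctx =
  fixes V :: "'a set" and E :: "'a set set" and f :: "'a \<Rightarrow> nat"
  assumes g: "graph V E"
    and conn: "\<forall>u\<in>V. \<forall>w\<in>V. (adj E)\<^sup>*\<^sup>* u w"
    and rf: "rdrd_function V E f"
    and le2: "\<forall>v\<in>V. f v \<le> 2"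
    and minR: "\<And>S. restrained_dominating_set V E S \<Longrightarrow> card {v\<in>V. 1 \<le> f v} \<le> card S"
    and minD: "\<And>S. dominating_set V E S \<Longrightarrow> card {v\<in>V. 2 \<le> f v} \<le> card S"
begin

abbreviation "R \<equiv> {v\<in>V. 1 \<le> f v}"

lemma fin: "finite V" using g by (simp add: graph_def)

lemma f2R: "x \<in> nbrs V E z \<Longrightarrow> f x = 2 \<Longrightarrow> x \<in> R"
  using nb_V[of x V E z] by simp

lemma le2': "x \<in> V \<Longrightarrow> f x \<noteq> 2 \<Longrightarrow> f x = 0 \<or> f x = 1"
proof -
  assume "x \<in> V" "f x \<noteq> 2"
  moreover have "f x \<le> 2" using le2 \<open>x \<in> V\<close> by blast
  ultimately show ?thesis by arith
qed

lemma r1: "z \<in> V \<Longrightarrow> f z = 1 \<Longrightarrow> \<exists>x\<in>nbrs V E z. f x = 2"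
  using rf le2 nb_V unfolding rdrd_function_def by (metis le_antisym)

lemma r0z: "z \<in> V \<Longrightarrow> f z = 0 \<Longrightarrow> \<exists>x\<in>nbrs V E z. f x = 0"
  using rf unfolding rdrd_function_def by blast

lemma r0a: assumes "z \<in> V" "f z = 0" shows "\<exists>x\<in>nbrs V E z. f x = 2 \<and> x \<noteq> a"
proof -
  have "2 \<le> card {u\<in>nbrs V E z. f u = 2} \<or> (\<exists>u\<in>nbrs V E z. f u = 3)"
    using rf assms unfolding rdrd_function_def by blast
  moreover have "\<not>(\<exists>u\<in>nbrs V E z. f u = 3)" using le2 nb_V by fastforce
  ultimately have c: "2 \<le> card {u\<in>nbrs V E z. f u = 2}" by blast
  show ?thesis
  proof (rule ccontr)
    assume "\<not> ?thesis"
    hence "{u\<in>nbrs V E z. f u = 2} \<subseteq> {a}" by blast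
    hence "card {u\<in>nbrs V E z. f u = 2} \<le> card {a}" by (rule card_mono[rotated]) simp
    with c show False by simp
  qed
qed

lemma badX:
  assumes X: "X \<subseteq> R" "X \<noteq> {}"
    and h1: "\<And>z. z \<in> X \<Longrightarrow> (\<exists>a\<in>nbrs V E z. a \<in> R \<and> a \<notin> X) \<and> (\<exists>b\<in>nbrs V E z. b \<notin> R \<or> b \<in> X)"
    and h0: "\<And>z. z \<in> V \<Longrightarrow> f z = 0 \<Longrightarrow> \<exists>a\<in>nbrs V E z. a \<in> R \<and> a \<notin> X"
  shows False
proof -
  have "\<forall>z\<in>V - (R - X). nbrs V E z \<inter> (R - X) \<noteq> {} \<and> nbrs V E z \<inter> (V - (R - X)) \<noteq> {}"
  proof
    fix z assume z: "z \<in> V - (R - X)"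
    show "nbrs V E z \<inter> (R - X) \<noteq> {} \<and> nbrs V E z \<inter> (V - (R - X)) \<noteq> {}"
    proof (cases "z \<in> X")
      case True
      then obtain a b where "a\<in>nbrs V E z" "a \<in> R" "a \<notin> X" "b\<in>nbrs V E z" "b \<notin> R \<or> b \<in> X"
        using h1 by blast
      moreover have "b \<in> V" using \<open>b\<in>nbrs V E z\<close> nb_V by metis
      ultimately show ?thesis by blast
    next
      case False
      with z have "f z = 0" by auto
      then obtain a b where "a\<in>nbrs V E z" "a \<in> R" "a \<notin> X" "b\<in>nbrs V E z" "f b = 0"
        using h0 r0z z by blast
      moreover have "b \<in> V" using \<open>b\<in>nbrs V E z\<close> nb_V by metis
      ultimately show ?thesis by auto
    qed
  qed
  hence "restrained_dominating_set V E (R - X)" unfolding restrained_dominating_set_def by blast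
  hence "card R \<le> card (R - X)" using minR by blast
  moreover have "card (R - X) < card R"
    using X fin by (intro psubset_card_mono) auto
  ultimately show False by simp
qed

lemma F1: assumes v: "v \<in> V" "f v = 1" and y: "y \<in> nbrs V E v" shows "f y = 2"
proof (rule ccontr)
  assume ne: "f y \<noteq> 2"
  have yV: "y \<in> V" using y nb_V by metis
  then have y01: "f y = 0 \<or> f y = 1" using le2' ne by blast
  obtain u where u: "u \<in> nbrs V E v" "f u = 2" using r1 v by blast
  have uV: "u \<in> V" using u nb_V by metis
  show False
  proof (cases "f y = 0")
    case True
    show False
    proof (rule badX[of "{v}"])
      show "{v} \<subseteq> R" using v by auto
      fix z assume "z \<in> {v}"
      moreover have "u \<in> R" "u \<notin> {v}" "y \<notin> R" using u uV True v by auto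
      ultimately show "(\<exists>a\<in>nbrs V E z. a \<in> R \<and> a \<notin> {v}) \<and> (\<exists>b\<in>nbrs V E z. b \<notin> R \<or> b \<in> {v})"
        using u y by blast
    next
      fix z assume "z \<in> V" "f z = 0"
      then obtain x where x: "x\<in>nbrs V E z" "f x = 2" using r0a by blast
      have "x \<in> R" "x \<notin> {v}" using f2R[OF x] x(2) v(2) by auto
      then show "\<exists>a\<in>nbrs V E z. a \<in> R \<and> a \<notin> {v}" using x(1) by blast
    qed simp
  next
    case False
    with y01 have fy: "f y = 1" by simp
    obtain u' where u': "u' \<in> nbrs V E y" "f u' = 2" using r1 yV fy by blast
    have u'V: "u' \<in> V" using u' nb_V by metis
    have vy: "v \<in> nbrs V E y" using nb_sym y v by metis
    show False
    proof (rule badX[of "{v,y}"])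
      show "{v,y} \<subseteq> R" using v yV fy by auto
      fix z assume "z \<in> {v,y}"
      moreover have "u \<in> R" "u \<notin> {v,y}" "u' \<in> R" "u' \<notin> {v,y}" using u uV u' u'V fy v by auto
      ultimately show "(\<exists>a\<in>nbrs V E z. a \<in> R \<and> a \<notin> {v,y}) \<and> (\<exists>b\<in>nbrs V E z. b \<notin> R \<or> b \<in> {v,y})"
        using u y u' vy by blast
    next
      fix z assume "z \<in> V" "f z = 0"
      then obtain x where x: "x\<in>nbrs V E z" "f x = 2" using r0a by blast
      have "x \<in> R" "x \<notin> {v,y}" using f2R[OF x] x(2) v(2) fy by auto
      then show "\<exists>a\<in>nbrs V E z. a \<in> R \<and> a \<notin> {v,y}" using x(1) by blast
    qed simp
  qed
qed

lemma F2: assumes v: "v \<in> V" "f v = 1" and u: "u \<in> nbrs V E v" and z: "z \<in> nbrs V E u"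
  shows "f z \<noteq> 0"
proof
  assume fz: "f z = 0"
  have fu: "f u = 2" using F1 v u by blast
  have uV: "u \<in> V" using u nb_V by metis
  have vu: "v \<in> nbrs V E u" using nb_sym u v by metis
  show False
  proof (rule badX[of "{u}"])
    show "{u} \<subseteq> R" using uV fu by auto
    fix z' assume "z' \<in> {u}"
    moreover have "v \<in> R" "v \<notin> {u}" "z \<notin> R" using v fu fz by auto
    ultimately show "(\<exists>a\<in>nbrs V E z'. a \<in> R \<and> a \<notin> {u}) \<and> (\<exists>b\<in>nbrs V E z'. b \<notin> R \<or> b \<in> {u})"
      using vu z by blast
  next
    fix z' assume "z' \<in> V" "f z' = 0"
    then obtain x where x: "x\<in>nbrs V E z'" "f x = 2" "x \<noteq> u" using r0a by blast
    have "x \<in> R" "x \<notin> {u}" using f2R[OF x(1,2)] x(3) by auto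
    then show "\<exists>a\<in>nbrs V E z'. a \<in> R \<and> a \<notin> {u}" using x(1) by blast
  qed simp
qed

lemma edge: assumes v: "v \<in> V" "f v = 1" and u: "u \<in> nbrs V E v" and a: "a \<in> nbrs V E v" "a \<noteq> u"
  and b: "b \<in> nbrs V E u" "b \<noteq> v"
  shows False
proof -
  have fu: "f u = 2" using F1 v u by blast
  have fa: "f a = 2" using F1 v a by blast
  have fb: "f b \<noteq> 0" using F2 v u b by blast
  have uV: "u \<in> V" using u nb_V by metis
  have aV: "a \<in> V" using a nb_V by metis
  have bV: "b \<in> V" using b nb_V by metis
  have bu: "b \<noteq> u" using nb_ne[OF g b(1)] .
  have vu: "v \<in> nbrs V E u" using nb_sym u v by metis
  show False
  proof (rule badX[of "{u,v}"])
    show "{u,v} \<subseteq> R" using uV fu v by auto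
    fix z assume "z \<in> {u,v}"
    then show "(\<exists>a\<in>nbrs V E z. a \<in> R \<and> a \<notin> {u,v}) \<and> (\<exists>b\<in>nbrs V E z. b \<notin> R \<or> b \<in> {u,v})"
    proof
      have "b \<in> R" "b \<notin> {u,v}" using b bV fb bu by auto
      moreover assume "z = u" 
      ultimately show ?thesis using b vu by blast
    next
      have "a \<in> R" "a \<notin> {u,v}" using a aV fa v by auto
      moreover assume "z \<in> {v}" 
      ultimately show ?thesis using a u by blast
    qed
  next
    fix z assume z: "z \<in> V" "f z = 0"
    then obtain x where x: "x\<in>nbrs V E z" "f x = 2" using r0a by blast
    have "x \<noteq> u"
    proof
      assume "x = u"
      then have "z \<in> nbrs V E u" using nb_sym x z by metis
      then show False using F2 v u z by blast
    qed
    then have "x \<in> R" "x \<notin> {u,v}" using f2R[OF x] x(2) v(2) by auto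
    then show "\<exists>a\<in>nbrs V E z. a \<in> R \<and> a \<notin> {u,v}" using x(1) by blast
  qed simp
qed

lemma uu: assumes v: "v \<in> V" "f v = 1" and u: "u \<in> nbrs V E v" and x: "x \<in> nbrs V E u" "f x = 2"
  shows False
proof -
  have fu: "f u = 2" using F1 v u by blast
  have uV: "u \<in> V" using u nb_V by metis
  have xV: "x \<in> V" using x nb_V by metis
  have vu: "v \<in> nbrs V E u" using nb_sym u v by metis
  have ux: "u \<in> nbrs V E x" using nb_sym x uV by metis
  have xu: "x \<noteq> u" using nb_ne[OF g x(1)] .
  show False
  proof (cases "\<exists>y\<in>nbrs V E x. f y = 1")
    case True
    then obtain y where y: "y \<in> nbrs V E x" "f y = 1" by blast
    have yV: "y \<in> V" using y nb_V by metis
    have xy: "x \<in> nbrs V E y" using nb_sym y xV by metis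
    show False
    proof (rule badX[of "{u,x}"])
      show "{u,x} \<subseteq> R" using uV fu xV x by auto
      fix z assume "z \<in> {u,x}"
      then show "(\<exists>a\<in>nbrs V E z. a \<in> R \<and> a \<notin> {u,x}) \<and> (\<exists>b\<in>nbrs V E z. b \<notin> R \<or> b \<in> {u,x})"
      proof
        have "v \<in> R" "v \<notin> {u,x}" using v fu x by auto
        moreover assume "z = u"
        ultimately show ?thesis using vu x by blast
      next
        have "y \<in> R" "y \<notin> {u,x}" using y yV x fu by auto
        moreover assume "z \<in> {x}"
        ultimately show ?thesis using y ux by blast
      qed
    next
      fix z assume z: "z \<in> V" "f z = 0"
      then obtain w where w: "w\<in>nbrs V E z" "f w = 2" using r0a by blast
      have "w \<noteq> u"
      proof
        assume "w = u"
        then have "z \<in> nbrs V E u" using nb_sym w z by metis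
        then show False using F2 v u z by blast
      qed
      moreover have "w \<noteq> x"
      proof
        assume "w = x"
        then have "z \<in> nbrs V E x" using nb_sym w z by metis
        then show False using F2 yV y(2) xy z by blast
      qed
      ultimately have "w \<in> R" "w \<notin> {u,x}" using f2R[OF w] by auto
      then show "\<exists>a\<in>nbrs V E z. a \<in> R \<and> a \<notin> {u,x}" using w(1) by blast
    qed simp
  next
    case False
    let ?D = "{w\<in>V. 2 \<le> f w}"
    have "dominating_set V E (?D - {x})" unfolding dominating_set_def
    proof (intro conjI ballI)
      show "?D - {x} \<subseteq> V" by auto
      fix z assume z: "z \<in> V - (?D - {x})"
      show "nbrs V E z \<inter> (?D - {x}) \<noteq> {}"
      proof (cases "z = x")
        case True then show ?thesis using ux uV fu xu by auto
      next
        case zx: False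
        with z have "f z = 0 \<or> f z = 1" using le2' by auto
        then show ?thesis
        proof
          assume "f z = 0"
          then obtain w where w: "w\<in>nbrs V E z" "f w = 2" "w \<noteq> x" using r0a z by blast
          have "w \<in> ?D - {x}" using nb_V[OF w(1)] w(2,3) by simp
          then show ?thesis using w(1) by blast
        next
          assume fz: "f z = 1"
          then obtain w where w: "w\<in>nbrs V E z" "f w = 2" using r1 z by blast
          have "w \<noteq> x"
          proof
            assume "w = x"
            have zV: "z \<in> V" using z by blast
            have "z \<in> nbrs V E w" using nb_sym[OF w(1) zV] .
            then have "z \<in> nbrs V E x" using \<open>w = x\<close> by simp
            then show False using False fz by blast
          qed
          then have "w \<in> ?D - {x}" using nb_V[OF w(1)] w(2) by simp
          then show ?thesis using w(1) by blast
        qed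
      qed
    qed
    hence "card ?D \<le> card (?D - {x})" using minD by blast
    moreover have "card (?D - {x}) < card ?D"
    proof (rule psubset_card_mono)
      show "finite ?D" using fin by simp
      have "x \<in> ?D" using xV x(2) by simp
      then show "?D - {x} \<subset> ?D" by blast
    qed
    ultimately show False by simp
  qed
qed

lemma center: assumes v: "v \<in> V" "f v = 1"
  shows "\<exists>c\<in>V. \<forall>w\<in>nbrs V E c. nbrs V E w = {c}"
proof -
  obtain u where u: "u \<in> nbrs V E v" "f u = 2" using r1 v by blast
  have uV: "u \<in> V" using u nb_V by metis
  show ?thesis
  proof (cases "\<exists>a\<in>nbrs V E v. a \<noteq> u")
    case True
    then obtain a where a: "a \<in> nbrs V E v" "a \<noteq> u" by blast
    show ?thesis
    proof (intro bexI[of _ v] ballI)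
      fix w assume w: "w \<in> nbrs V E v"
      obtain a' where a': "a' \<in> nbrs V E v" "a' \<noteq> w"
        using a u by (cases "w = u") auto
      have "\<forall>b\<in>nbrs V E w. b = v"
        using edge[OF v w a'] by blast
      moreover have "v \<in> nbrs V E w" using nb_sym w v by metis
      ultimately show "nbrs V E w = {v}" by blast
    qed (rule v)
  next
    case False
    hence nv: "nbrs V E v = {u}" using u by blast
    show ?thesis
    proof (intro bexI[of _ u] ballI)
      fix x assume x: "x \<in> nbrs V E u"
      show "nbrs V E x = {u}"
      proof (cases "x = v")
        case True then show ?thesis using nv by simp
      next
        case xv: False
        have xV: "x \<in> V" using x nb_V by metis
        have "f x \<noteq> 0" using F2 v u(1) x by blast
        moreover have "f x \<noteq> 2" using uu v u(1) x by blast
        ultimately have fx: "f x = 1" using le2'[OF xV] by auto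
        have ux: "u \<in> nbrs V E x" using nb_sym x uV by metis
        have vu: "v \<in> nbrs V E u" using nb_sym u v by metis
        have "\<forall>b\<in>nbrs V E x. b = u"
          using edge[OF xV fx ux _ _ vu not_sym[OF xv]] by blast
        then show ?thesis using ux by blast
      qed
    qed (rule uV)
  qed
qed

lemma star: assumes v: "v \<in> V" "f v = 1" shows "\<exists>m\<ge>1. is_star V E m"
proof -
  obtain c where c: "c \<in> V" and cn: "\<forall>w\<in>nbrs V E c. nbrs V E w = {c}" using center v by blast
  let ?C = "insert c (nbrs V E c)"
  have reach: "w \<in> ?C" if "(adj E)\<^sup>*\<^sup>* c w" for w
    using that
  proof (induction rule: rtranclp_induct)
    case base then show ?case by simp
  next
    case (step y z)
    have yV: "y \<in> V" using step.IH c nb_V by auto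
    have "{y,z} \<in> E" using step.hyps(2) by (simp add: adj_def)
    hence "z \<in> V" using g by (auto simp: graph_def)
    hence zy: "z \<in> nbrs V E y" using step.hyps(2) by (simp add: nbrs_def)
    show ?case
    proof (cases "y = c")
      case True then show ?thesis using zy by simp
    next
      case False then show ?thesis using step.IH cn zy by auto
    qed
  qed
  have leaf: "nbrs V E w = {c}" if "w \<in> V" "w \<noteq> c" for w
  proof -
    have "w \<in> ?C" using reach conn c that(1) by blast
    then show ?thesis using that cn by auto
  qed
  obtain u where u: "u \<in> nbrs V E v" using r1 v by blast
  have "u \<in> V" "u \<noteq> v" using u nb_V nb_ne[OF g u] by auto
  hence "card {u,v} \<le> card V" using v fin by (intro card_mono) auto
  hence cV: "2 \<le> card V" using \<open>u \<noteq> v\<close> by simp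
  have Eeq: "E = {{c, w} | w. w \<in> V - {c}}"
  proof
    show "E \<subseteq> {{c, w} | w. w \<in> V - {c}}"
    proof
      fix e assume e: "e \<in> E"
      then have "e \<subseteq> V" "card e = 2" using g by (auto simp: graph_def)
      then obtain a b where ab: "e = {a,b}" "a \<noteq> b" "a \<in> V" "b \<in> V" by (auto simp: card_2_iff)
      have ba: "b \<in> nbrs V E a" using e ab by (simp add: nbrs_def adj_def)
      show "e \<in> {{c, w} | w. w \<in> V - {c}}"
      proof (cases "a = c")
        case True then show ?thesis using ab by blast
      next
        case False
        have "b = c" using leaf[OF ab(3) False] ba by blast
        then have "e = {c,a}" using ab by auto
        then show ?thesis using ab False by blast
      qed
    qed
  next
    show "{{c, w} | w. w \<in> V - {c}} \<subseteq> E"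
    proof
      fix e assume "e \<in> {{c, w} | w. w \<in> V - {c}}"
      then obtain w where w: "e = {c,w}" "w \<in> V" "w \<noteq> c" by blast
      then have "c \<in> nbrs V E w" using leaf by auto
      then show "e \<in> E" using w by (simp add: nbrs_def adj_def insert_commute)
    qed
  qed
  have m1: "1 \<le> card V - 1" using cV by auto
  have "card V = card V - 1 + 1" using cV by auto
  hence st: "card V = card V - 1 + 1 \<and> E = {{c, w} | w. w \<in> V - {c}}" using Eeq by (rule conjI)
  have "\<exists>c\<in>V. card V = card V - 1 + 1 \<and> E = {{c, w} | w. w \<in> V - {c}}"
    using st c by (rule bexI)
  hence "is_star V E (card V - 1)" unfolding is_star_def .
  then show ?thesis using m1 by (intro exI[of _ "card V - 1"] conjI)
qed

end


lemma rd0: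
  assumes rf: "rdrd_function V E f" and z: "z \<in> V" "f z = 0"
  shows "\<exists>u\<in>nbrs V E z. 2 \<le> f u"
proof -
  have "2 \<le> card {u\<in>nbrs V E z. f u = 2} \<or> (\<exists>u\<in>nbrs V E z. f u = 3)"
    using rf z unfolding rdrd_function_def by blast
  then show ?thesis
  proof
    assume "2 \<le> card {u\<in>nbrs V E z. f u = 2}"
    then have "{u\<in>nbrs V E z. f u = 2} \<noteq> {}" by (metis card.empty not_numeral_le_zero)
    then show ?thesis by fastforce
  next
    assume "\<exists>u\<in>nbrs V E z. f u = 3"
    then obtain u where u: "u \<in> nbrs V E z" "f u = 3" by blast
    moreover have "2 \<le> f u" using u(2) by simp
    ultimately show ?thesis by blast
  qed
qed

lemma star_ub:
  assumes g: "graph V E" and st: "is_star V E m"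
  shows "rdrd_number V E \<le> domination_number V E + restrained_domination_number V E"
proof -
  obtain c where c: "c \<in> V" and Eq: "E = {{c, v} | v. v \<in> V - {c}}"
    using st unfolding is_star_def by blast
  have fin: "finite V" using g by (simp add: graph_def)
  have leaf: "nbrs V E w = {c}" if w: "w \<in> V" "w \<noteq> c" for w
  proof
    show "nbrs V E w \<subseteq> {c}"
    proof
      fix u assume "u \<in> nbrs V E w"
      then have "{w,u} \<in> E" by (simp add: nbrs_def adj_def)
      then obtain x where "{w,u} = {c,x}" using Eq by blast
      then show "u \<in> {c}" using w by (auto simp: doubleton_eq_iff)
    qed
    have "{w,c} \<in> E" using Eq w by (auto simp: insert_commute)
    then show "{c} \<subseteq> nbrs V E w" using c by (simp add: nbrs_def adj_def)
  qed
  define f where "f = (\<lambda>v. if v = c then 2 else (1::nat))"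
  have rf: "rdrd_function V E f"
    unfolding rdrd_function_def
  proof (intro conjI ballI impI)
    fix v assume "v \<in> V" "f v = 1"
    then have "v \<noteq> c" by (auto simp: f_def)
    then have "c \<in> nbrs V E v" using leaf \<open>v \<in> V\<close> by blast
    then show "\<exists>u\<in>nbrs V E v. 2 \<le> f u" by (auto simp: f_def)
  qed (auto simp: f_def split: if_splits)
  have "sum f V = f c + sum f (V - {c})" using sum.remove[OF fin c] .
  also have "sum f (V - {c}) = sum (\<lambda>_. 1) (V - {c})" by (rule sum.cong) (auto simp: f_def)
  also have "\<dots> = card V - 1" using c fin by simp
  finally have sf: "sum f V = card V + 1" using c fin card_gt_0_iff[of V] by (auto simp: f_def)
  obtain S where S: "dominating_set V E S" "card S = domination_number V E" using dom_att fin by blast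
  have g1: "1 \<le> domination_number V E"
  proof (rule ccontr)
    assume "\<not> ?thesis"
    then have "card S = 0" using S by simp
    moreover have "finite S" using S(1) fin by (auto simp: dominating_set_def intro: finite_subset)
    ultimately have "S = {}" by simp
    then show False using S(1) c by (auto simp: dominating_set_def)
  qed
  obtain T where T: "restrained_dominating_set V E T" "card T = restrained_domination_number V E"
    using rd_att fin by blast
  have TV: "T \<subseteq> V" using T(1) by (simp add: restrained_dominating_set_def)
  have bad: False if x: "x \<in> V" "x \<noteq> c" "x \<notin> T" for x
  proof -
    have "nbrs V E x \<inter> T \<noteq> {}" "nbrs V E x \<inter> (V - T) \<noteq> {}"
      using T(1) x unfolding restrained_dominating_set_def by blast+
    then show False using leaf[OF x(1,2)] by auto
  qed
  have "V \<subseteq> T"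
  proof
    fix w assume w: "w \<in> V"
    show "w \<in> T"
    proof (rule ccontr)
      assume wT: "w \<notin> T"
      show False
      proof (cases "w = c")
        case False then show False using bad w wT by blast
      next
        case True
        have "nbrs V E c \<inter> (V - T) \<noteq> {}"
          using T(1) w wT True unfolding restrained_dominating_set_def by blast
        then obtain x where x: "x \<in> nbrs V E c" "x \<in> V" "x \<notin> T" by blast
        have "x \<noteq> c" using nb_ne[OF g x(1)] .
        then show False using bad x by blast
      qed
    qed
  qed
  hence "card V \<le> card T" using TV fin by (simp add: card_mono)
  hence "card V + 1 \<le> domination_number V E + restrained_domination_number V E" using g1 T(2) by simp
  moreover have "rdrd_number V E \<le> sum f V" using rdrd_le[OF rf] .
  ultimately show ?thesis using sf by simp
qed

lemma r2_ub:
  assumes fin: "finite V"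
  shows "rdrd_number V E \<le> 2 * restrained_2domination_number V E"
proof -
  obtain S where S: "restrained_2dominating_set V E S" "card S = restrained_2domination_number V E"
    using r2_att fin by blast
  have SV: "S \<subseteq> V" using S(1) by (simp add: restrained_2dominating_set_def)
  define f where "f = (\<lambda>v. if v \<in> S then 2 else (0::nat))"
  have rf: "rdrd_function V E f"
    unfolding rdrd_function_def
  proof (intro conjI ballI impI)
    fix v assume v: "v \<in> V" "f v = 0"
    then have vS: "v \<notin> S" by (auto simp: f_def)
    have "{u\<in>nbrs V E v. f u = 2} = nbrs V E v \<inter> S" by (auto simp: f_def)
    moreover have "2 \<le> card (nbrs V E v \<inter> S)"
      using S(1) v vS unfolding restrained_2dominating_set_def by blast
    ultimately show "2 \<le> card {u\<in>nbrs V E v. f u = 2} \<or> (\<exists>u\<in>nbrs V E v. f u = 3)" by simp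
    have "nbrs V E v \<inter> (V - S) \<noteq> {}"
      using S(1) v vS unfolding restrained_2dominating_set_def by blast
    then show "\<exists>u\<in>nbrs V E v. f u = 0" by (auto simp: f_def)
  qed (auto simp: f_def split: if_splits)
  have "sum f V = sum (\<lambda>_. 2) {x\<in>V. x \<in> S}" unfolding f_def by (rule sum.inter_filter[OF fin, symmetric])
  also have "{x\<in>V. x \<in> S} = S" using SV by blast
  finally have "sum f V = 2 * card S" by simp
  then show ?thesis using rdrd_le[OF rf] S(2) by simp
qed

theorem theorem2p8:
  fixes V :: "'a set" and E :: "'a set set"
  assumes "connected_graph V E"
  shows "rdrd_number V E \<ge> domination_number V E + restrained_domination_number V E \<and>
         (rdrd_number V E = domination_number V E + restrained_domination_number V E \<longleftrightarrow>
           (\<exists>m\<ge>1. is_star V E m) \<or>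
           (restrained_2domination_number V E = restrained_domination_number V E \<and>
            restrained_domination_number V E = domination_number V E))"
proof -
  have g: "graph V E" and conn: "\<forall>u\<in>V. \<forall>w\<in>V. (adj E)\<^sup>*\<^sup>* u w"
    using assms unfolding connected_graph_def by blast+
  have fin: "finite V" using g by (simp add: graph_def)
  obtain f where rf: "rdrd_function V E f" and wf: "sum f V = rdrd_number V E"
    using rdrd_att by blast
  have le3: "\<forall>v\<in>V. f v \<le> 3" using rf by (simp add: rdrd_function_def)
  let ?R = "{v\<in>V. 1 \<le> f v}" and ?D = "{v\<in>V. 2 \<le> f v}" and ?T = "{v\<in>V. f v = 3}"
  have W: "sum f V = card ?R + card ?D + card ?T" using weight[OF fin le3] .
  have Rrd: "restrained_dominating_set V E ?R"
    unfolding restrained_dominating_set_def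
  proof (intro conjI ballI)
    show "?R \<subseteq> V" by blast
    fix z assume z: "z \<in> V - ?R"
    then have zV: "z \<in> V" and fz: "f z = 0" by auto
    obtain u where u: "u \<in> nbrs V E z" "2 \<le> f u" using rd0[OF rf zV fz] by blast
    have "u \<in> ?R" using u nb_V[OF u(1)] by simp
    then show "nbrs V E z \<inter> ?R \<noteq> {}" using u(1) by blast
    obtain w where w: "w \<in> nbrs V E z" "f w = 0" using rf zV fz unfolding rdrd_function_def by blast
    have "w \<in> V - ?R" using w nb_V[OF w(1)] by simp
    then show "nbrs V E z \<inter> (V - ?R) \<noteq> {}" using w(1) by blast
  qed
  have Ddom: "dominating_set V E ?D"
    unfolding dominating_set_def
  proof (intro conjI ballI)
    show "?D \<subseteq> V" by blast
    fix z assume z: "z \<in> V - ?D"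
    then have zV: "z \<in> V" and fz: "f z = 0 \<or> f z = 1" by auto
    have "\<exists>u\<in>nbrs V E z. 2 \<le> f u"
      using fz rd0[OF rf zV] rf zV unfolding rdrd_function_def by blast
    then obtain u where u: "u \<in> nbrs V E z" "2 \<le> f u" by blast
    have "u \<in> ?D" using u nb_V[OF u(1)] by simp
    then show "nbrs V E z \<inter> ?D \<noteq> {}" using u(1) by blast
  qed
  have gD: "domination_number V E \<le> card ?D" using dom_le[OF Ddom] .
  have gR: "restrained_domination_number V E \<le> card ?R" using rd_le[OF Rrd] .
  have part1: "domination_number V E + restrained_domination_number V E \<le> rdrd_number V E"
    using W wf gD gR by linarith
  have part2: "rdrd_number V E = domination_number V E + restrained_domination_number V E \<longleftrightarrow>
           (\<exists>m\<ge>1. is_star V E m) \<or>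
           (restrained_2domination_number V E = restrained_domination_number V E \<and>
            restrained_domination_number V E = domination_number V E)"
  proof
    assume eq: "rdrd_number V E = domination_number V E + restrained_domination_number V E"
    have cT: "card ?T = 0" and eD: "domination_number V E = card ?D"
      and eR: "restrained_domination_number V E = card ?R"
      using W wf gD gR eq by linarith+
    have "?T = {}" using cT fin by simp
    hence le2: "\<forall>v\<in>V. f v \<le> 2" using le3 by force
    have minR: "\<And>S. restrained_dominating_set V E S \<Longrightarrow> card ?R \<le> card S"
      using rd_le eR by metis
    have minD: "\<And>S. dominating_set V E S \<Longrightarrow> card ?D \<le> card S"
      using dom_le eD by metis
    show "(\<exists>m\<ge>1. is_star V E m) \<or>
           (restrained_2domination_number V E = restrained_domination_number V E \<and>
            restrained_domination_number V E = domination_number V E)"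
    proof (cases "\<exists>v\<in>V. f v = 1")
      case True
      then obtain v where v: "v \<in> V" "f v = 1" by blast
      interpret ctx V E f
        using g conn rf le2 minR minD by unfold_locales auto
      have "\<exists>m\<ge>1. is_star V E m" using star[OF v] .
      then show ?thesis by blast
    next
      case False
      have r2: "restrained_2dominating_set V E ?D"
        unfolding restrained_2dominating_set_def
      proof (intro conjI ballI)
        show "?D \<subseteq> V" by blast
        fix z assume z: "z \<in> V - ?D"
        then have zV: "z \<in> V" by blast
        have "f z \<le> 2" using le2 zV by blast
        then have fz: "f z = 0" using z False by auto
        have "2 \<le> card {u\<in>nbrs V E z. f u = 2} \<or> (\<exists>u\<in>nbrs V E z. f u = 3)"
          using rf zV fz unfolding rdrd_function_def by blast
        moreover have "\<not> (\<exists>u\<in>nbrs V E z. f u = 3)"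
        proof
          assume "\<exists>u\<in>nbrs V E z. f u = 3"
          then obtain u where "u \<in> nbrs V E z" "f u = 3" by blast
          moreover have "f u \<le> 2" using le2 nb_V[OF \<open>u \<in> nbrs V E z\<close>] by blast
          ultimately show False by simp
        qed
        moreover have "{u\<in>nbrs V E z. f u = 2} = nbrs V E z \<inter> ?D"
        proof
          show "{u\<in>nbrs V E z. f u = 2} \<subseteq> nbrs V E z \<inter> ?D" using nb_V by fastforce
          show "nbrs V E z \<inter> ?D \<subseteq> {u\<in>nbrs V E z. f u = 2}"
          proof
            fix u assume u: "u \<in> nbrs V E z \<inter> ?D"
            then have "f u \<le> 2" "2 \<le> f u" using le2 by auto
            then show "u \<in> {u\<in>nbrs V E z. f u = 2}" using u by simp
          qed
        qed
        ultimately show "2 \<le> card (nbrs V E z \<inter> ?D)" by simp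
        obtain w where w: "w \<in> nbrs V E z" "f w = 0" using rf zV fz unfolding rdrd_function_def by blast
        have "w \<in> V - ?D" using w nb_V[OF w(1)] by simp
        then show "nbrs V E z \<inter> (V - ?D) \<noteq> {}" using w(1) by blast
      qed
      have a: "restrained_2domination_number V E \<le> card ?D" using r2_le[OF r2] .
      have b: "domination_number V E \<le> restrained_domination_number V E" using gam_le_r[OF fin] .
      have c: "restrained_domination_number V E \<le> restrained_2domination_number V E" using r_le_r2[OF fin] .
      show ?thesis using a b c eD by linarith
    qed
  next
    assume h: "(\<exists>m\<ge>1. is_star V E m) \<or>
           (restrained_2domination_number V E = restrained_domination_number V E \<and>
            restrained_domination_number V E = domination_number V E)"
    have "rdrd_number V E \<le> domination_number V E + restrained_domination_number V E"
      using h
    proof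
      assume "\<exists>m\<ge>1. is_star V E m"
      then obtain m where "is_star V E m" by blast
      then show ?thesis using star_ub[OF g] by blast
    next
      assume h2: "restrained_2domination_number V E = restrained_domination_number V E \<and>
            restrained_domination_number V E = domination_number V E"
      show ?thesis using r2_ub[OF fin, of E] h2 by linarith
    qed
    then show "rdrd_number V E = domination_number V E + restrained_domination_number V E"
      using part1 by linarith
  qed
  show ?thesis using part1 part2 by blast
qed

end
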